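(* Let $G=(V,E)$ be a graph with a partition of its vertex set into sets $V_1,\dots,V_t$ ($t$ a positive integer), each $V_i$ being a set of pairwise false twins. Let $m_i=|V_i|$ for $1\le i\le t$. Let $\Gamma$ be a finite Abelian group of order $m$ with $\sum_{i=1}^t m_i=m-1$. If $\Gamma^*$ can be partitioned into pairwise disjoint sets $S_1,\dots,S_t$ with $|S_i|=m_i$ and $\sum_{s\in S_i}s=0$ for every $i$, then $G$ has a $\Gamma^*$-distance magic labeling.
   Context: $\Gamma^*=\Gamma\setminus\{0\}$. In a graph $G=(V,E)$, a set $M\subseteq V$ is a module if $N(x)\setminus M=N(y)\setminus M$ for all $x,y\in M$. Two vertices $x,y$ are twins if $\{x,y\}$ is a module; they are false twins if moreover $\{x,y\}\notin E$ and true twins if $\{x,y\}\in E$ (every vertex is considered a false and true twin of itself). A $\Gamma^*$-distance magic labeling of $G$ (with $|V|=|\Gamma|-1$) is a bijection $\ell\colon V\to\Gamma^*$ such that the weight $w(v)=\sum_{u\in N(v)}\ell(u)$ is the same element of $\Gamma$ for all $v\in V$. *)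

theory Defs
  imports Main
begin

definition simple_graph :: "'v set \<Rightarrow> ('v \<Rightarrow> 'v \<Rightarrow> bool) \<Rightarrow> bool" where
  "simple_graph V E \<longleftrightarrow> finite V \<and> (\<forall>x y. E x y \<longrightarrow> x \<in> V \<and> y \<in> V)
     \<and> (\<forall>x y. E x y \<longrightarrow> E y x) \<and> (\<forall>x. \<not> E x x)"

definition nbhd :: "'v set \<Rightarrow> ('v \<Rightarrow> 'v \<Rightarrow> bool) \<Rightarrow> 'v \<Rightarrow> 'v set" where
  "nbhd V E x = {y \<in> V. E x y}"

definition is_module :: "'v set \<Rightarrow> ('v \<Rightarrow> 'v \<Rightarrow> bool) \<Rightarrow> 'v set \<Rightarrow> bool" where
  "is_module V E M \<longleftrightarrow> M \<subseteq> V \<and> (\<forall>x\<in>M. \<forall>y\<in>M. nbhd V E x - M = nbhd V E y - M)"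

text \<open>False twins (every vertex is a false twin of itself).\<close>
definition false_twins :: "'v set \<Rightarrow> ('v \<Rightarrow> 'v \<Rightarrow> bool) \<Rightarrow> 'v \<Rightarrow> 'v \<Rightarrow> bool" where
  "false_twins V E x y \<longleftrightarrow> is_module V E {x, y} \<and> \<not> E x y"

definition distance_magic_labeling ::
  "'v set \<Rightarrow> ('v \<Rightarrow> 'v \<Rightarrow> bool) \<Rightarrow> ('v \<Rightarrow> 'g::{ab_group_add,finite}) \<Rightarrow> bool" where
  "distance_magic_labeling V E l \<longleftrightarrow> bij_betw l V (UNIV - {0}) \<and>
     (\<exists>w. \<forall>v\<in>V. (\<Sum>u\<in>nbhd V E v. l u) = w)"

end

theory Submission
  imports Defs
begin

theorem proposition4p7:
  fixes V :: "'v set" and E :: "'v \<Rightarrow> 'v \<Rightarrow> bool"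
    and t :: nat and P :: "nat \<Rightarrow> 'v set" and S :: "nat \<Rightarrow> 'g::{ab_group_add,finite} set"
  assumes graph: "simple_graph V E"
    and t_pos: "t \<ge> 1"
    and P_nonempty: "\<forall>i\<in>{1..t}. P i \<noteq> {}"
    and P_disj: "\<forall>i\<in>{1..t}. \<forall>j\<in>{1..t}. i \<noteq> j \<longrightarrow> P i \<inter> P j = {}"
    and P_cover: "(\<Union>i\<in>{1..t}. P i) = V"
    and P_twins: "\<forall>i\<in>{1..t}. \<forall>x\<in>P i. \<forall>y\<in>P i. false_twins V E x y"
    and card_sum: "(\<Sum>i\<in>{1..t}. card (P i)) = card (UNIV :: 'g set) - 1"
    and S_disj: "\<forall>i\<in>{1..t}. \<forall>j\<in>{1..t}. i \<noteq> j \<longrightarrow> S i \<inter> S j = {}"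
    and S_cover: "(\<Union>i\<in>{1..t}. S i) = UNIV - {0}"
    and S_card: "\<forall>i\<in>{1..t}. card (S i) = card (P i)"
    and S_sum: "\<forall>i\<in>{1..t}. (\<Sum>s\<in>S i. s) = 0"
  shows "\<exists>l :: 'v \<Rightarrow> 'g. distance_magic_labeling V E l"
proof -
  have fin: "finite V" using graph by (simp add: simple_graph_def)
  have PV: "\<And>i. i \<in> {1..t} \<Longrightarrow> P i \<subseteq> V" using P_cover by blast
  have "\<forall>i\<in>{1..t}. \<exists>f. bij_betw f (P i) (S i)"
  proof
    fix i assume i: "i \<in> {1..t}"
    have "finite (P i)" using PV[OF i] fin finite_subset by blast
    moreover have "finite (S i)" by simp
    moreover have "card (P i) = card (S i)" using S_card i by simp
    ultimately show "\<exists>f. bij_betw f (P i) (S i)"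
      by (rule finite_same_card_bij)
  qed
  then obtain F where F: "\<forall>i\<in>{1..t}. bij_betw (F i) (P i) (S i)" by metis
  define cls where "cls v = (THE i. i \<in> {1..t} \<and> v \<in> P i)" for v
  have cls: "cls v = i" if "i \<in> {1..t}" "v \<in> P i" for v i
    unfolding cls_def
  proof (rule the_equality)
    show "i \<in> {1..t} \<and> v \<in> P i" using that by blast
    fix j assume "j \<in> {1..t} \<and> v \<in> P j"
    then show "j = i" using P_disj that by blast
  qed
  define l where "l v = F (cls v) v" for v
  have lP: "l v = F i v" if "i \<in> {1..t}" "v \<in> P i" for v i
    using cls[OF that] l_def by simp
  have lS: "l v \<in> S i" if "i \<in> {1..t}" "v \<in> P i" for v i
    using bij_betw_apply[OF F[rule_format, OF that(1)] that(2)] lP[OF that] by simp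
  have inj: "inj_on l V"
  proof
    fix x y assume x: "x \<in> V" and y: "y \<in> V" and e: "l x = l y"
    obtain i where i: "i \<in> {1..t}" "x \<in> P i" using x P_cover by blast
    obtain j where j: "j \<in> {1..t}" "y \<in> P j" using y P_cover by blast
    have lx: "l x \<in> S i" using lS[OF i] .
    have ly: "l y \<in> S j" using lS[OF j] .
    have "i = j"
    proof (rule ccontr)
      assume "i \<noteq> j"
      then have "S i \<inter> S j = {}" using S_disj i(1) j(1) by simp
      then show False using lx ly e by (metis IntI empty_iff)
    qed
    then have "F i x = F i y" using e lP i j by simp
    then show "x = y" using inj_onD[OF bij_betw_imp_inj_on[OF F[rule_format, OF i(1)]]] i(2) j(2) \<open>i = j\<close>
      by blast
  qed
  have img: "l ` V = UNIV - {0}"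
  proof
    show "l ` V \<subseteq> UNIV - {0}"
    proof
      fix z assume "z \<in> l ` V"
      then obtain x where x: "x \<in> V" "z = l x" by blast
      obtain i where i: "i \<in> {1..t}" "x \<in> P i" using x P_cover by blast
      have "l x \<in> (\<Union>i\<in>{1..t}. S i)" using lS[OF i] i(1) by blast
      then have "l x \<in> UNIV - {0}" by (simp only: S_cover)
      then show "z \<in> UNIV - {0}" using x(2) by simp
    qed
  next
    show "UNIV - {0} \<subseteq> l ` V"
    proof
      fix z :: 'g assume "z \<in> UNIV - {0}"
      then have "z \<in> (\<Union>i\<in>{1..t}. S i)" by (simp only: S_cover)
      then obtain i where i: "i \<in> {1..t}" "z \<in> S i" by blast
      then have "z \<in> F i ` P i" using bij_betw_imp_surj_on[OF F[rule_format, OF i(1)]] by simp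
      then obtain x where x: "x \<in> P i" "z = F i x" by blast
      have "z = l x" using lP[OF i(1) x(1)] x(2) by simp
      moreover have "x \<in> V" using PV[OF i(1)] x(1) by blast
      ultimately show "z \<in> l ` V" by blast
    qed
  qed
  have closed: "u' \<in> nbhd V E v"
    if v: "v \<in> V" and j: "j \<in> {1..t}" and u: "u \<in> P j" "u \<in> nbhd V E v" and u': "u' \<in> P j" for v u u' j
  proof -
    have ft: "false_twins V E u u'" using P_twins j u u' by blast
    have Euv: "E u v" using u graph by (simp add: nbhd_def simple_graph_def)
    have n1: "v \<noteq> u" using graph Euv by (auto simp: simple_graph_def)
    have "\<not> E u u'" using ft by (simp add: false_twins_def)
    then have n2: "v \<noteq> u'" using Euv by metis
    have n3: "v \<in> nbhd V E u" using Euv v by (simp add: nbhd_def)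
    have mod: "is_module V E {u, u'}" using ft by (simp add: false_twins_def)
    have "\<forall>x\<in>{u, u'}. \<forall>y\<in>{u, u'}. nbhd V E x - {u, u'} = nbhd V E y - {u, u'}"
      using mod unfolding is_module_def by (rule conjunct2)
    then have n4: "nbhd V E u - {u, u'} = nbhd V E u' - {u, u'}" by blast
    have "v \<in> nbhd V E u - {u, u'}" using n1 n2 n3 by blast
    then have "v \<in> nbhd V E u'" using n4 by blast
    then have "E u' v" by (simp add: nbhd_def)
    then have "E v u'" using graph unfolding simple_graph_def by blast
    moreover have "u' \<in> V" using PV[OF j] u' by blast
    ultimately show ?thesis by (simp add: nbhd_def)
  qed
  have wt: "(\<Sum>u\<in>nbhd V E v. l u) = 0" if v: "v \<in> V" for v
  proof -
    define J where "J = {j\<in>{1..t}. P j \<inter> nbhd V E v \<noteq> {}}"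
    have eq: "nbhd V E v = (\<Union>j\<in>J. P j)"
    proof
      show "nbhd V E v \<subseteq> (\<Union>j\<in>J. P j)"
      proof
        fix u assume u: "u \<in> nbhd V E v"
        then have "u \<in> V" by (simp add: nbhd_def)
        then obtain j where "j \<in> {1..t}" "u \<in> P j" using P_cover by blast
        then show "u \<in> (\<Union>j\<in>J. P j)" using u J_def by blast
      qed
    next
      show "(\<Union>j\<in>J. P j) \<subseteq> nbhd V E v"
        using closed[OF v] unfolding J_def by blast
    qed
    have "(\<Sum>u\<in>nbhd V E v. l u) = (\<Sum>j\<in>J. \<Sum>u\<in>P j. l u)"
      unfolding eq
    proof (rule sum.UNION_disjoint)
      show "finite J" unfolding J_def by simp
      show "\<forall>i\<in>J. finite (P i)" unfolding J_def using PV fin finite_subset by blast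
      show "\<forall>i\<in>J. \<forall>j\<in>J. i \<noteq> j \<longrightarrow> P i \<inter> P j = {}" unfolding J_def using P_disj by blast
    qed
    also have "\<dots> = (\<Sum>j\<in>J. (0::'g))"
    proof (rule sum.cong)
      fix j assume "j \<in> J"
      then have j: "j \<in> {1..t}" unfolding J_def by blast
      have "(\<Sum>u\<in>P j. l u) = (\<Sum>u\<in>P j. F j u)" using lP[OF j] by simp
      also have "\<dots> = (\<Sum>s\<in>S j. s)"
        using sum.reindex_bij_betw[OF F[rule_format, OF j], of "\<lambda>s. s"] by simp
      also have "\<dots> = 0" using S_sum j by blast
      finally show "(\<Sum>u\<in>P j. l u) = 0" .
    qed simp
    finally show ?thesis by simp
  qed
  have "distance_magic_labeling V E l"
    unfolding distance_magic_labeling_def bij_betw_def using inj img wt by blast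
  then show ?thesis by blast
qed

end
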